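(* Let $(\mathsf P,\mathcal O)$ be a semitopology. Then the map $\mathrm{nbhd}:\mathsf P\to\mathrm{Points}(\mathcal O,\subseteq,\between)$, $p\mapsto\{O\in\mathcal O\mid p\in O\}$, is a continuous map from $(\mathsf P,\mathcal O)$ to $\mathrm{St}(\mathcal O,\subseteq,\between)$; the semitopology $\mathrm{St}(\mathcal O,\subseteq,\between)$ is sober; and $\mathrm{nbhd}^{-1}$ maps each open set $\mathrm{Op}(O)$ of $\mathrm{St}(\mathcal O,\subseteq,\between)$ to $O$, giving a bijection between the open sets of $\mathrm{St}(\mathcal O,\subseteq,\between)$ and $\mathcal O$ which preserves and reflects both subset inclusion and nonempty intersection (an isomorphism of semiframes).
   Context: A semitopology is a set $\mathsf P$ with $\mathcal O\subseteq\mathcal P(\mathsf P)$ containing $\varnothing,\mathsf P$ and closed under arbitrary unions; a map between semitopologies is continuous when preimages of open sets are open. $(\mathcal O,\subseteq,\between)$, with $O\between O'$ iff $O\cap O'\neq\varnothing$, is a semiframe. In a semiframe (complete join-semilattice $(X,\le)$ with commutative $\ast$, $x\ast x$ for $x\neq\bot$, and $x\ast\bigvee Y$ iff $\exists y\in Y.\,x\ast y$), an abstract point is a nonempty, up-closed, pairwise $\ast$-compatible, completely prime subset ($\bigvee Y\in F\Rightarrow\exists y\in Y.\,y\in F$, for all $Y$ including $\varnothing$); $\mathrm{Points}(X,\le,\ast)$ is the set of abstract points; $\mathrm{Op}(x)$ is the set of abstract points containing $x$; $\mathrm{St}(X,\le,\ast)$ is the semitopology with points $\mathrm{Points}(X,\le,\ast)$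 and opens $\{\mathrm{Op}(x)\mid x\in X\}$. A semitopology is sober when $\mathrm{nbhd}$ is a bijection from its points onto the abstract points of its semiframe of open sets. *)

theory Defs
  imports Main
begin

definition semitopology :: "'a set \<Rightarrow> 'a set set \<Rightarrow> bool" where
  "semitopology P Ops \<longleftrightarrow> Ops \<subseteq> Pow P \<and> {} \<in> Ops \<and> P \<in> Ops \<and> (\<forall>S. S \<subseteq> Ops \<longrightarrow> \<Union>S \<in> Ops)"

definition continuous_map_st ::
  "'a set \<Rightarrow> 'a set set \<Rightarrow> 'b set \<Rightarrow> 'b set set \<Rightarrow> ('a \<Rightarrow> 'b) \<Rightarrow> bool" where
  "continuous_map_st P Ops P' Ops' f \<longleftrightarrow>
     f ` P \<subseteq> P' \<and> (\<forall>U\<in>Ops'. {p \<in> P. f p \<in> U} \<in> Ops)"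

definition between :: "'a set \<Rightarrow> 'a set \<Rightarrow> bool" where
  "between A B \<longleftrightarrow> A \<inter> B \<noteq> {}"

text \<open>Semiframes given as carrier X, order le, compatibility relation cp.
  j is the join (least upper bound) of Y in X.\<close>
definition is_join :: "'x set \<Rightarrow> ('x \<Rightarrow> 'x \<Rightarrow> bool) \<Rightarrow> 'x set \<Rightarrow> 'x \<Rightarrow> bool" where
  "is_join X le Y j \<longleftrightarrow> j \<in> X \<and> (\<forall>y\<in>Y. le y j) \<and> (\<forall>z\<in>X. (\<forall>y\<in>Y. le y z) \<longrightarrow> le j z)"

definition abstract_points :: "'x set \<Rightarrow> ('x \<Rightarrow> 'x \<Rightarrow> bool) \<Rightarrow> ('x \<Rightarrow> 'x \<Rightarrow> bool) \<Rightarrow> 'x set set" where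
  "abstract_points X le cp = {F. F \<subseteq> X \<and> F \<noteq> {}
      \<and> (\<forall>x\<in>F. \<forall>y\<in>X. le x y \<longrightarrow> y \<in> F)
      \<and> (\<forall>x\<in>F. \<forall>y\<in>F. cp x y)
      \<and> (\<forall>Y j. Y \<subseteq> X \<longrightarrow> is_join X le Y j \<longrightarrow> j \<in> F \<longrightarrow> (\<exists>y\<in>Y. y \<in> F))}"

definition Op :: "'x set \<Rightarrow> ('x \<Rightarrow> 'x \<Rightarrow> bool) \<Rightarrow> ('x \<Rightarrow> 'x \<Rightarrow> bool) \<Rightarrow> 'x \<Rightarrow> 'x set set" where
  "Op X le cp x = {F \<in> abstract_points X le cp. x \<in> F}"

text \<open>Opens of St(X, le, cp); its points are abstract_points X le cp.\<close>
definition St_opens :: "'x set \<Rightarrow> ('x \<Rightarrow> 'x \<Rightarrow> bool) \<Rightarrow> ('x \<Rightarrow> 'x \<Rightarrow> bool) \<Rightarrow> 'x set set set" where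
  "St_opens X le cp = Op X le cp ` X"

definition nbhd :: "'a set set \<Rightarrow> 'a \<Rightarrow> 'a set set" where
  "nbhd Ops p = {U \<in> Ops. p \<in> U}"

definition sober :: "'a set \<Rightarrow> 'a set set \<Rightarrow> bool" where
  "sober P Ops \<longleftrightarrow> bij_betw (nbhd Ops) P (abstract_points Ops (\<subseteq>) between)"

end

theory Submission
  imports Defs
begin

lemma join_eq:
  assumes st: "semitopology P Ops" and Y: "Y \<subseteq> Ops" and j: "is_join Ops (\<subseteq>) Y j"
  shows "j = \<Union>Y"
proof -
  have "\<Union>Y \<in> Ops" using st Y unfolding semitopology_def by blast
  then show ?thesis using j unfolding is_join_def by (meson Sup_least Sup_upper subset_antisym)
qed

lemma join_union:
  assumes st: "semitopology P Ops" and Y: "Y \<subseteq> Ops"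
  shows "is_join Ops (\<subseteq>) Y (\<Union>Y)"
  using st Y unfolding semitopology_def is_join_def by blast

lemma nbhd_ap:
  assumes st: "semitopology P Ops" and p: "p \<in> P"
  shows "nbhd Ops p \<in> abstract_points Ops (\<subseteq>) between"
proof -
  have PO: "P \<in> Ops" using st unfolding semitopology_def by blast
  show ?thesis unfolding abstract_points_def nbhd_def
  proof (intro CollectI conjI ballI allI impI)
    fix Y j assume Y: "Y \<subseteq> Ops" and "is_join Ops (\<subseteq>) Y j" and "j \<in> {U \<in> Ops. p \<in> U}"
    then have "j = \<Union>Y" "p \<in> j" using join_eq[OF st] by auto
    then show "\<exists>y\<in>Y. y \<in> {U \<in> Ops. p \<in> U}" using Y by auto
  qed (use PO p in \<open>auto simp: between_def\<close>)
qed

lemma pre_Op: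
  assumes st: "semitopology P Ops" and U: "U \<in> Ops"
  shows "{p \<in> P. nbhd Ops p \<in> Op Ops (\<subseteq>) between U} = U"
proof -
  have "U \<subseteq> P" using st U unfolding semitopology_def by blast
  then show ?thesis using nbhd_ap[OF st] U unfolding Op_def nbhd_def by auto
qed

lemma apg:
  assumes "F \<in> abstract_points X le cp"
  shows "F \<subseteq> X" "F \<noteq> {}" "\<And>x y. x \<in> F \<Longrightarrow> y \<in> X \<Longrightarrow> le x y \<Longrightarrow> y \<in> F"
    "\<And>x y. x \<in> F \<Longrightarrow> y \<in> F \<Longrightarrow> cp x y"
    "\<And>Y j. Y \<subseteq> X \<Longrightarrow> is_join X le Y j \<Longrightarrow> j \<in> F \<Longrightarrow> \<exists>y\<in>Y. y \<in> F"
  using assms unfolding abstract_points_def by auto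

lemma ap_props:
  assumes "F \<in> abstract_points Ops (\<subseteq>) between"
  shows "F \<subseteq> Ops" "F \<noteq> {}" "\<And>x y. x \<in> F \<Longrightarrow> y \<in> Ops \<Longrightarrow> x \<subseteq> y \<Longrightarrow> y \<in> F"
    "\<And>x y. x \<in> F \<Longrightarrow> y \<in> F \<Longrightarrow> x \<inter> y \<noteq> {}"
    "\<And>Y j. Y \<subseteq> Ops \<Longrightarrow> is_join Ops (\<subseteq>) Y j \<Longrightarrow> j \<in> F \<Longrightarrow> \<exists>y\<in>Y. y \<in> F"
  using apg[OF assms] unfolding between_def by auto

lemma Op_sub_iff:
  assumes st: "semitopology P Ops" and U: "U \<in> Ops" and V: "V \<in> Ops"
  shows "Op Ops (\<subseteq>) between U \<subseteq> Op Ops (\<subseteq>) between V \<longleftrightarrow> U \<subseteq> V"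
proof
  assume "Op Ops (\<subseteq>) between U \<subseteq> Op Ops (\<subseteq>) between V"
  then have "{p \<in> P. nbhd Ops p \<in> Op Ops (\<subseteq>) between U} \<subseteq> {p \<in> P. nbhd Ops p \<in> Op Ops (\<subseteq>) between V}"
    by blast
  then show "U \<subseteq> V" using pre_Op[OF st U] pre_Op[OF st V] by simp
next
  assume "U \<subseteq> V"
  then show "Op Ops (\<subseteq>) between U \<subseteq> Op Ops (\<subseteq>) between V"
    using V ap_props(3) unfolding Op_def by blast
qed

lemma Op_inj:
  assumes st: "semitopology P Ops" and U: "U \<in> Ops" and V: "V \<in> Ops"
  shows "Op Ops (\<subseteq>) between U = Op Ops (\<subseteq>) between V \<longleftrightarrow> U = V"
  using Op_sub_iff[OF st U V] Op_sub_iff[OF st V U] by blast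

lemma Op_between_iff:
  assumes st: "semitopology P Ops" and U: "U \<in> Ops" and V: "V \<in> Ops"
  shows "between (Op Ops (\<subseteq>) between U) (Op Ops (\<subseteq>) between V) \<longleftrightarrow> between U V"
proof
  assume "between (Op Ops (\<subseteq>) between U) (Op Ops (\<subseteq>) between V)"
  then obtain F where "F \<in> abstract_points Ops (\<subseteq>) between" "U \<in> F" "V \<in> F"
    unfolding between_def Op_def by blast
  then show "between U V" using ap_props(4) unfolding between_def by blast
next
  assume "between U V"
  then obtain p where "p \<in> U" "p \<in> V" unfolding between_def by blast
  moreover have "U \<subseteq> P" using st U unfolding semitopology_def by blast
  ultimately have "nbhd Ops p \<in> Op Ops (\<subseteq>) between U" "nbhd Ops p \<in> Op Ops (\<subseteq>) between V"
    using pre_Op[OF st U] pre_Op[OF st V] by blast+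
  then show "between (Op Ops (\<subseteq>) between U) (Op Ops (\<subseteq>) between V)"
    unfolding between_def by blast
qed

lemma ap_P:
  assumes st: "semitopology P Ops" and F: "F \<in> abstract_points Ops (\<subseteq>) between"
  shows "P \<in> F"
proof -
  obtain x where x: "x \<in> F" using ap_props(2)[OF F] by blast
  have "x \<subseteq> P" "P \<in> Ops" using st x ap_props(1)[OF F] unfolding semitopology_def by blast+
  then show ?thesis using ap_props(3)[OF F x] by blast
qed

lemma ap_empty:
  assumes F: "F \<in> abstract_points Ops (\<subseteq>) between"
  shows "{} \<notin> F"
  using ap_props(4)[OF F] by blast

lemma St_semitop:
  assumes st: "semitopology P Ops"
  shows "semitopology (abstract_points Ops (\<subseteq>) between) (St_opens Ops (\<subseteq>) between)"
  unfolding semitopology_def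
proof (intro conjI allI impI)
  let ?AP = "abstract_points Ops (\<subseteq>) between"
  let ?Op = "Op Ops (\<subseteq>) between"
  show "St_opens Ops (\<subseteq>) between \<subseteq> Pow ?AP" unfolding St_opens_def Op_def by auto
  have "{} \<in> Ops" "P \<in> Ops" using st unfolding semitopology_def by auto
  moreover have "?Op {} = {}" using ap_empty unfolding Op_def by blast
  moreover have "?Op P = ?AP" using ap_P[OF st] unfolding Op_def by blast
  ultimately show "{} \<in> St_opens Ops (\<subseteq>) between" "?AP \<in> St_opens Ops (\<subseteq>) between"
    unfolding St_opens_def by (metis image_eqI)+
  fix S assume S: "S \<subseteq> St_opens Ops (\<subseteq>) between"
  define X where "X = {x \<in> Ops. ?Op x \<in> S}"
  have XO: "X \<subseteq> Ops" unfolding X_def by blast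
  have UO: "\<Union>X \<in> Ops" using st XO unfolding semitopology_def by blast
  have "\<Union>S = ?Op (\<Union>X)"
  proof
    show "\<Union>S \<subseteq> ?Op (\<Union>X)"
    proof
      fix F assume "F \<in> \<Union>S"
      then obtain V where V: "V \<in> S" "F \<in> V" by blast
      then obtain x where x: "x \<in> Ops" "V = ?Op x" using S unfolding St_opens_def by blast
      then have "x \<in> X" using V unfolding X_def by blast
      moreover have F: "F \<in> ?AP" "x \<in> F" using V x unfolding Op_def by auto
      ultimately show "F \<in> ?Op (\<Union>X)" using ap_props(3)[OF F(1) F(2) UO] unfolding Op_def by blast
    qed
  next
    show "?Op (\<Union>X) \<subseteq> \<Union>S"
    proof
      fix F assume "F \<in> ?Op (\<Union>X)"
      then have F: "F \<in> ?AP" "\<Union>X \<in> F" unfolding Op_def by auto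
      then obtain y where "y \<in> X" "y \<in> F" using ap_props(5)[OF F(1) XO join_union[OF st XO]] by blast
      then show "F \<in> \<Union>S" using F unfolding X_def Op_def by blast
    qed
  qed
  then show "\<Union>S \<in> St_opens Ops (\<subseteq>) between" using UO unfolding St_opens_def by blast
qed

lemma nbhd_St:
  assumes F: "F \<in> abstract_points Ops (\<subseteq>) between"
  shows "nbhd (St_opens Ops (\<subseteq>) between) F = Op Ops (\<subseteq>) between ` F"
  using F ap_props(1)[OF F] unfolding nbhd_def St_opens_def Op_def by blast

lemma St_sober:
  assumes st: "semitopology P Ops"
  shows "sober (abstract_points Ops (\<subseteq>) between) (St_opens Ops (\<subseteq>) between)"
  unfolding sober_def
proof -
  let ?AP = "abstract_points Ops (\<subseteq>) between"
  let ?Op = "Op Ops (\<subseteq>) between"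
  let ?S = "St_opens Ops (\<subseteq>) between"
  let ?AQ = "abstract_points ?S (\<subseteq>) between"
  have injOp: "inj_on ?Op Ops" using Op_inj[OF st] by (meson inj_onI)
  have inj: "inj_on (nbhd ?S) ?AP"
  proof (rule inj_onI)
    fix F G assume F: "F \<in> ?AP" and G: "G \<in> ?AP" and "nbhd ?S F = nbhd ?S G"
    then have "?Op ` F = ?Op ` G" using nbhd_St by metis
    then show "F = G" using inj_on_image_eq_iff[OF injOp ap_props(1)[OF F] ap_props(1)[OF G]] by simp
  qed
  have into: "?Op ` F \<in> ?AQ" if F: "F \<in> ?AP" for F
  proof -
    have FO: "F \<subseteq> Ops" using ap_props(1)[OF F] .
    show ?thesis unfolding abstract_points_def
    proof (intro CollectI conjI ballI allI impI)
      show "?Op ` F \<subseteq> ?S" using FO unfolding St_opens_def by blast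
      show "?Op ` F \<noteq> {}" using ap_props(2)[OF F] by blast
    next
      fix V W assume V: "V \<in> ?Op ` F" and W: "W \<in> ?S" and VW: "V \<subseteq> W"
      obtain x where x: "x \<in> F" "V = ?Op x" using V by blast
      obtain y where y: "y \<in> Ops" "W = ?Op y" using W unfolding St_opens_def by blast
      have "x \<subseteq> y" using VW x y FO Op_sub_iff[OF st] by blast
      then show "W \<in> ?Op ` F" using ap_props(3)[OF F x(1) y(1)] y by blast
    next
      fix V W assume V: "V \<in> ?Op ` F" and W: "W \<in> ?Op ` F"
      obtain x where x: "x \<in> F" "V = ?Op x" using V by blast
      obtain y where y: "y \<in> F" "W = ?Op y" using W by blast
      have "between x y" using ap_props(4)[OF F x(1) y(1)] unfolding between_def .
      then show "between V W" using Op_between_iff[OF st] x y FO by blast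
    next
      fix Y J assume Y: "Y \<subseteq> ?S" and J: "is_join ?S (\<subseteq>) Y J" and JF: "J \<in> ?Op ` F"
      obtain j where j: "j \<in> F" "J = ?Op j" using JF by blast
      have jO: "j \<in> Ops" using j FO by blast
      define X where "X = {x \<in> Ops. ?Op x \<in> Y}"
      have XO: "X \<subseteq> Ops" unfolding X_def by blast
      have YX: "Y = ?Op ` X" using Y unfolding X_def St_opens_def by blast
      have "is_join Ops (\<subseteq>) X j" unfolding is_join_def
      proof (intro conjI ballI impI)
        show "j \<in> Ops" by fact
      next
        fix x assume "x \<in> X"
        then have "?Op x \<subseteq> J" "x \<in> Ops" using J unfolding X_def is_join_def by auto
        then show "x \<subseteq> j" using Op_sub_iff[OF st _ jO] j by blast
      next
        fix z assume z: "z \<in> Ops" and ub: "\<forall>x\<in>X. x \<subseteq> z"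
        have "\<forall>V\<in>Y. V \<subseteq> ?Op z" using ub YX Op_sub_iff[OF st _ z] XO by blast
        moreover have "?Op z \<in> ?S" using z unfolding St_opens_def by blast
        ultimately have "J \<subseteq> ?Op z" using J unfolding is_join_def by blast
        then show "j \<subseteq> z" using Op_sub_iff[OF st jO z] j by blast
      qed
      then obtain x where "x \<in> X" "x \<in> F" using ap_props(5)[OF F XO] j by blast
      then show "\<exists>y\<in>Y. y \<in> ?Op ` F" unfolding X_def by blast
    qed
  qed
  have onto: "G \<in> nbhd ?S ` ?AP" if G: "G \<in> ?AQ" for G
  proof -
    have GS: "G \<subseteq> ?S" using apg(1)[OF G] .
    define F where "F = {x \<in> Ops. ?Op x \<in> G}"
    have FO: "F \<subseteq> Ops" unfolding F_def by blast
    have GF: "G = ?Op ` F" using GS unfolding F_def St_opens_def by blast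
    have "F \<in> ?AP" unfolding abstract_points_def
    proof (intro CollectI conjI ballI allI impI)
      show "F \<subseteq> Ops" by fact
      show "F \<noteq> {}" using GF apg(2)[OF G] by blast
    next
      fix x y assume x: "x \<in> F" and y: "y \<in> Ops" and xy: "x \<subseteq> y"
      have "?Op x \<subseteq> ?Op y" using Op_sub_iff[OF st _ y] x FO xy by blast
      moreover have "?Op y \<in> ?S" using y unfolding St_opens_def by blast
      ultimately have "?Op y \<in> G" using apg(3)[OF G] x unfolding F_def by blast
      then show "y \<in> F" using y unfolding F_def by blast
    next
      fix x y assume x: "x \<in> F" and y: "y \<in> F"
      then have "between (?Op x) (?Op y)" using apg(4)[OF G] unfolding F_def by blast
      then show "between x y" using Op_between_iff[OF st] x y FO by blast
    next
      fix Y j assume Y: "Y \<subseteq> Ops" and J: "is_join Ops (\<subseteq>) Y j" and jF: "j \<in> F"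
      have jO: "j \<in> Ops" using J unfolding is_join_def by blast
      have "is_join ?S (\<subseteq>) (?Op ` Y) (?Op j)" unfolding is_join_def
      proof (intro conjI ballI impI)
        show "?Op j \<in> ?S" using jO unfolding St_opens_def by blast
      next
        fix V assume "V \<in> ?Op ` Y"
        then obtain y where "y \<in> Y" "V = ?Op y" by blast
        then show "V \<subseteq> ?Op j" using J Y Op_sub_iff[OF st _ jO] unfolding is_join_def by blast
      next
        fix W assume W: "W \<in> ?S" and ub: "\<forall>V\<in>?Op ` Y. V \<subseteq> W"
        obtain z where z: "z \<in> Ops" "W = ?Op z" using W unfolding St_opens_def by blast
        have "\<forall>y\<in>Y. y \<subseteq> z" using ub z Op_sub_iff[OF st _ z(1)] Y by blast
        then have "j \<subseteq> z" using J z unfolding is_join_def by blast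
        then show "?Op j \<subseteq> W" using Op_sub_iff[OF st jO z(1)] z by blast
      qed
      note jn = this
      have YS: "?Op ` Y \<subseteq> ?S" using Y unfolding St_opens_def by blast
      have jG: "?Op j \<in> G" using jF unfolding F_def by blast
      have "\<exists>V\<in>?Op ` Y. V \<in> G" by (rule apg(5)[OF G YS jn jG])
      then obtain V where "V \<in> ?Op ` Y" "V \<in> G" by blast
      then show "\<exists>y\<in>Y. y \<in> F" using Y unfolding F_def by blast
    qed
    then show ?thesis using GF nbhd_St by (metis image_eqI)
  qed
  show "bij_betw (nbhd ?S) ?AP ?AQ"
    unfolding bij_betw_def
  proof (intro conjI inj equalityI subsetI)
    fix G assume "G \<in> nbhd ?S ` ?AP"
    then obtain F where F: "F \<in> ?AP" "G = nbhd ?S F" by blast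
    then show "G \<in> ?AQ" using into[OF F(1)] nbhd_St[OF F(1)] by simp
  next
    fix G assume "G \<in> ?AQ"
    then show "G \<in> nbhd ?S ` ?AP" by (rule onto)
  qed
qed

theorem theorem8p5:
  fixes P :: "'a set" and Ops :: "'a set set"
  assumes "semitopology P Ops"
  shows "continuous_map_st P Ops (abstract_points Ops (\<subseteq>) between) (St_opens Ops (\<subseteq>) between) (nbhd Ops)
    \<and> semitopology (abstract_points Ops (\<subseteq>) between) (St_opens Ops (\<subseteq>) between)
    \<and> sober (abstract_points Ops (\<subseteq>) between) (St_opens Ops (\<subseteq>) between)
    \<and> (\<forall>U\<in>Ops. {p \<in> P. nbhd Ops p \<in> Op Ops (\<subseteq>) between U} = U)
    \<and> bij_betw (\<lambda>V. {p \<in> P. nbhd Ops p \<in> V}) (St_opens Ops (\<subseteq>) between) Ops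
    \<and> (\<forall>V\<in>St_opens Ops (\<subseteq>) between. \<forall>W\<in>St_opens Ops (\<subseteq>) between.
         (V \<subseteq> W \<longleftrightarrow> {p \<in> P. nbhd Ops p \<in> V} \<subseteq> {p \<in> P. nbhd Ops p \<in> W})
       \<and> (between V W \<longleftrightarrow> between {p \<in> P. nbhd Ops p \<in> V} {p \<in> P. nbhd Ops p \<in> W}))"
proof -
  let ?AP = "abstract_points Ops (\<subseteq>) between"
  let ?Op = "Op Ops (\<subseteq>) between"
  let ?S = "St_opens Ops (\<subseteq>) between"
  let ?pre = "\<lambda>V. {p \<in> P. nbhd Ops p \<in> V}"
  note st = assms
  have c: "continuous_map_st P Ops ?AP ?S (nbhd Ops)"
    unfolding continuous_map_st_def
  proof (intro conjI ballI subsetI)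
    fix x assume "x \<in> nbhd Ops ` P"
    then show "x \<in> ?AP" using nbhd_ap[OF st] by blast
  next
    fix V assume "V \<in> ?S"
    then obtain U where "U \<in> Ops" "V = ?Op U" unfolding St_opens_def by blast
    then show "?pre V \<in> Ops" using pre_Op[OF st] by simp
  qed
  have pre: "\<forall>U\<in>Ops. ?pre (?Op U) = U" using pre_Op[OF st] by blast
  have bij: "bij_betw ?pre ?S Ops"
  proof (rule bij_betw_imageI)
    show "inj_on ?pre ?S"
    proof (rule inj_onI)
      fix V W assume "V \<in> ?S" "W \<in> ?S" "?pre V = ?pre W"
      then obtain U U' where "U \<in> Ops" "V = ?Op U" "U' \<in> Ops" "W = ?Op U'" "?pre V = ?pre W"
        unfolding St_opens_def by blast
      then show "V = W" using pre by simp
    qed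
    have "?pre ` ?S = (\<lambda>U. ?pre (?Op U)) ` Ops" unfolding St_opens_def image_image ..
    also have "\<dots> = id ` Ops" using pre by (intro image_cong) auto
    finally show "?pre ` ?S = Ops" by simp
  qed
  have iso: "\<forall>V\<in>?S. \<forall>W\<in>?S. (V \<subseteq> W \<longleftrightarrow> ?pre V \<subseteq> ?pre W) \<and> (between V W \<longleftrightarrow> between (?pre V) (?pre W))"
  proof (intro ballI)
    fix V W assume "V \<in> ?S" "W \<in> ?S"
    then obtain U U' where U: "U \<in> Ops" "V = ?Op U" and U': "U' \<in> Ops" "W = ?Op U'"
      unfolding St_opens_def by blast
    show "(V \<subseteq> W \<longleftrightarrow> ?pre V \<subseteq> ?pre W) \<and> (between V W \<longleftrightarrow> between (?pre V) (?pre W))"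
      using U U' pre Op_sub_iff[OF st U(1) U'(1)] Op_between_iff[OF st U(1) U'(1)] by simp
  qed
  show ?thesis using c St_semitop[OF st] St_sober[OF st] pre bij iso by (intro conjI)
qed

end
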